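(* Let $X$ be a $T_1$ topological space with at least three points. Then $\mathrm{diam}(\Gamma(C_c(X)_F))=\mathrm{gr}(\Gamma(C_c(X)_F))=3$.
   Context: $C_c(X)_F$ denotes the set of all functions $f:X\to\mathbb{R}$ whose range is countable and whose set of points of discontinuity is finite; it is a commutative ring under pointwise operations. $\Gamma(C_c(X)_F)$ is the zero-divisor graph: vertices are the nonzero zero divisors of $C_c(X)_F$, and distinct vertices $f,g$ are adjacent iff $fg=0$. The diameter is the maximum over pairs of vertices of the length of a shortest path between them; the girth is the length of a shortest cycle ($\infty$ if there is none). *)

theory Defs
  imports "HOL-Analysis.Analysis" "HOL-Library.Extended_Nat"
begin

definition cont_at :: "'a topology \<Rightarrow> ('a \<Rightarrow> real) \<Rightarrow> 'a \<Rightarrow> bool" where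
  "cont_at X f x \<longleftrightarrow>
     (\<forall>V. open V \<and> f x \<in> V \<longrightarrow> (\<exists>U. openin X U \<and> x \<in> U \<and> f ` U \<subseteq> V))"

text \<open>The ring C_c(X)_F: functions on topspace X (extended by 0 outside) with countable
  range and finitely many points of discontinuity; operations are pointwise.\<close>
definition CcF :: "'a topology \<Rightarrow> ('a \<Rightarrow> real) set" where
  "CcF X = {f. (\<forall>x. x \<notin> topspace X \<longrightarrow> f x = 0)
              \<and> countable (f ` topspace X)
              \<and> finite {x \<in> topspace X. \<not> cont_at X f x}}"

definition zd_vertices :: "'a topology \<Rightarrow> ('a \<Rightarrow> real) set" where
  "zd_vertices X = {f \<in> CcF X. f \<noteq> (\<lambda>x. 0) \<and>
                     (\<exists>g \<in> CcF X. g \<noteq> (\<lambda>x. 0) \<and> (\<lambda>x. f x * g x) = (\<lambda>x. 0))}"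

definition zd_adj :: "('a \<Rightarrow> real) \<Rightarrow> ('a \<Rightarrow> real) \<Rightarrow> bool" where
  "zd_adj f g \<longleftrightarrow> f \<noteq> g \<and> (\<lambda>x. f x * g x) = (\<lambda>x. 0)"

definition is_walk :: "'v set \<Rightarrow> ('v \<Rightarrow> 'v \<Rightarrow> bool) \<Rightarrow> 'v list \<Rightarrow> bool" where
  "is_walk V E xs \<longleftrightarrow> xs \<noteq> [] \<and> set xs \<subseteq> V \<and> (\<forall>i. Suc i < length xs \<longrightarrow> E (xs!i) (xs!Suc i))"

definition graph_dist :: "'v set \<Rightarrow> ('v \<Rightarrow> 'v \<Rightarrow> bool) \<Rightarrow> 'v \<Rightarrow> 'v \<Rightarrow> enat" where
  "graph_dist V E u v =
     (INF xs \<in> {xs. is_walk V E xs \<and> hd xs = u \<and> last xs = v}. enat (length xs - 1))"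

definition graph_diam :: "'v set \<Rightarrow> ('v \<Rightarrow> 'v \<Rightarrow> bool) \<Rightarrow> enat" where
  "graph_diam V E = (SUP u \<in> V. SUP v \<in> V. graph_dist V E u v)"

definition is_cycle :: "'v set \<Rightarrow> ('v \<Rightarrow> 'v \<Rightarrow> bool) \<Rightarrow> 'v list \<Rightarrow> bool" where
  "is_cycle V E cs \<longleftrightarrow> length cs \<ge> 3 \<and> distinct cs \<and> is_walk V E cs \<and> E (last cs) (hd cs)"

definition graph_girth :: "'v set \<Rightarrow> ('v \<Rightarrow> 'v \<Rightarrow> bool) \<Rightarrow> enat" where
  "graph_girth V E = (INF cs \<in> {cs. is_cycle V E cs}. enat (length cs))"

end

theory Submission
  imports Defs
begin

definition ind :: "'a set \<Rightarrow> 'a \<Rightarrow> real" where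
  "ind S = (\<lambda>x. if x \<in> S then 1 else 0)"

lemma open_minus_pt:
  assumes "t1_space X" "p \<in> topspace X"
  shows "openin X (topspace X - {p})"
proof -
  have "closedin X {p}" using assms unfolding t1_space_closedin_singleton by simp
  then show ?thesis by (simp add: openin_diff)
qed

lemma cont_at_const:
  assumes "openin X U" "x \<in> U" "\<And>y. y \<in> U \<Longrightarrow> f y = f x"
  shows "cont_at X f x"
  unfolding cont_at_def
proof (intro allI impI)
  fix V :: "real set" assume V: "open V \<and> f x \<in> V"
  have "f ` U \<subseteq> V"
  proof
    fix z assume "z \<in> f ` U"
    then obtain y where "y \<in> U" "z = f y" by blast
    thus "z \<in> V" using assms(3) V by simp
  qed
  thus "\<exists>U. openin X U \<and> x \<in> U \<and> f ` U \<subseteq> V" using assms(1,2) by blast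
qed

lemma ind_in_CcF:
  assumes "t1_space X" "p \<in> topspace X" "S \<subseteq> topspace X"
    and "S - {p} = {} \<or> S - {p} = topspace X - {p}"
  shows "ind S \<in> CcF X"
proof -
  have "{x \<in> topspace X. \<not> cont_at X (ind S) x} \<subseteq> {p}"
  proof
    fix x assume x: "x \<in> {x \<in> topspace X. \<not> cont_at X (ind S) x}"
    show "x \<in> {p}"
    proof (rule ccontr)
      assume "x \<notin> {p}"
      hence xU: "x \<in> topspace X - {p}" using x by auto
      have eq: "ind S y = ind S x" if y: "y \<in> topspace X - {p}" for y
      proof (cases "S - {p} = {}")
        case True
        hence "y \<notin> S" "x \<notin> S" using y xU by blast+
        thus ?thesis unfolding ind_def by simp
      next
        case False
        hence "S - {p} = topspace X - {p}" using assms(4) by blast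
        hence "y \<in> S" "x \<in> S" using y xU by blast+
        thus ?thesis unfolding ind_def by simp
      qed
      have "cont_at X (ind S) x"
        using open_minus_pt[OF assms(1,2)] xU eq by (rule cont_at_const)
      thus False using x by auto
    qed
  qed
  hence fin: "finite {x \<in> topspace X. \<not> cont_at X (ind S) x}"
    using finite_subset by blast
  have "ind S ` topspace X \<subseteq> {0,1}" unfolding ind_def by auto
  hence "finite (ind S ` topspace X)" by (rule finite_subset) simp
  hence "countable (ind S ` topspace X)" by (rule countable_finite)
  moreover have "\<forall>x. x \<notin> topspace X \<longrightarrow> ind S x = 0"
    using assms(3) unfolding ind_def by auto
  ultimately show ?thesis using fin unfolding CcF_def by blast
qed

lemma walk_single: "is_walk V E [x] \<longleftrightarrow> x \<in> V"
  unfolding is_walk_def by auto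

lemma walk_cons2: "is_walk V E (x#y#xs) \<longleftrightarrow> x \<in> V \<and> E x y \<and> is_walk V E (y#xs)"
proof
  assume "is_walk V E (x#y#xs)"
  then have w: "set (x#y#xs) \<subseteq> V" "\<And>i. Suc i < length (x#y#xs) \<Longrightarrow> E ((x#y#xs)!i) ((x#y#xs)!Suc i)"
    unfolding is_walk_def by auto
  have "E x y" using w(2)[of 0] by simp
  moreover have "E ((y#xs)!i) ((y#xs)!Suc i)" if "Suc i < length (y#xs)" for i
  proof -
    have "Suc (Suc i) < length (x#y#xs)" using that by simp
    from w(2)[OF this] show ?thesis by simp
  qed
  ultimately show "x \<in> V \<and> E x y \<and> is_walk V E (y#xs)"
    using w(1) unfolding is_walk_def by auto
next
  assume a: "x \<in> V \<and> E x y \<and> is_walk V E (y#xs)"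
  show "is_walk V E (x#y#xs)"
    unfolding is_walk_def
  proof (intro conjI allI impI)
    fix i assume "Suc i < length (x#y#xs)"
    then show "E ((x#y#xs)!i) ((x#y#xs)!Suc i)"
      using a unfolding is_walk_def by (cases i) auto
  qed (use a in \<open>auto simp: is_walk_def\<close>)
qed

lemma dist_le:
  assumes "is_walk V E xs" "hd xs = u" "last xs = v"
  shows "graph_dist V E u v \<le> enat (length xs - 1)"
  unfolding graph_dist_def by (rule INF_lower) (use assms in simp)

lemma vanish_pt:
  assumes "f \<in> zd_vertices X"
  shows "\<exists>p\<in>topspace X. f p = 0"
proof -
  obtain g where g: "g \<in> CcF X" "g \<noteq> (\<lambda>x. 0)" "(\<lambda>x. f x * g x) = (\<lambda>x. 0)"
    using assms unfolding zd_vertices_def by blast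
  obtain x where x: "g x \<noteq> 0" using g(2) by auto
  have "x \<in> topspace X" using g(1) x unfolding CcF_def by auto
  moreover have "f x = 0"
  proof -
    have "f x * g x = 0" using fun_cong[OF g(3), of x] by simp
    thus ?thesis using x by simp
  qed
  ultimately show ?thesis by blast
qed

theorem theorem8p7:
  fixes X :: "'a topology"
  assumes "t1_space X"
    and "\<exists>a b c. a \<in> topspace X \<and> b \<in> topspace X \<and> c \<in> topspace X \<and> a \<noteq> b \<and> a \<noteq> c \<and> b \<noteq> c"
  shows "graph_diam (zd_vertices X) zd_adj = 3 \<and> graph_girth (zd_vertices X) zd_adj = 3"
proof -
  obtain a b c where abc: "a \<in> topspace X" "b \<in> topspace X" "c \<in> topspace X" "a \<noteq> b" "a \<noteq> c" "b \<noteq> c"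
    using assms(2) by blast
  define V where "V = zd_vertices X"
  define E where "E = (zd_adj :: ('a \<Rightarrow> real) \<Rightarrow> _)"
  define ch :: "'a \<Rightarrow> 'a \<Rightarrow> real" where "ch p = ind {p}" for p
  have chC: "ch p \<in> CcF X" if "p \<in> topspace X" for p
    unfolding ch_def by (rule ind_in_CcF[OF assms(1) that]) (use that in auto)
  have chp: "ch p p = 1" for p unfolding ch_def ind_def by auto
  have chq: "ch p q = 0" if "q \<noteq> p" for p q unfolding ch_def ind_def using that by auto
  have chprod: "(\<lambda>x. ch p x * ch q x) = (\<lambda>x. 0)" if "p \<noteq> q" for p q
    using that by (auto simp: fun_eq_iff ch_def ind_def)
  have chne: "ch p \<noteq> ch q" if "p \<noteq> q" for p q
    using that chp chq by (metis zero_neq_one)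
  have chnz: "ch p \<noteq> (\<lambda>x. 0)" for p using chp by (metis zero_neq_one)
  have chV: "ch p \<in> V" if "p \<in> topspace X" for p
  proof -
    obtain r where r: "r \<in> topspace X" "r \<noteq> p" using abc by metis
    show ?thesis unfolding V_def zd_vertices_def
      using chC[OF that] chC[OF r(1)] chnz chprod[of p r] r by blast
  qed
  have adjch: "E (ch p) (ch q)" if "p \<noteq> q" for p q
    unfolding E_def zd_adj_def using chne chprod that by blast
  have adjf: "E f (ch p)" "E (ch p) f" if "f p = 0" for f p
  proof -
    have ne: "f \<noteq> ch p" using that chp by (metis zero_neq_one)
    have "(\<lambda>x. f x * ch p x) = (\<lambda>x. 0)" using that by (auto simp: fun_eq_iff ch_def ind_def)
    moreover have "(\<lambda>x. ch p x * f x) = (\<lambda>x. 0)" using that by (auto simp: fun_eq_iff ch_def ind_def)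
    moreover have "ch p \<noteq> f" using ne by metis
    ultimately show "E f (ch p)" "E (ch p) f" unfolding E_def zd_adj_def using ne
      by blast+
  qed
  have cyc: "is_cycle V E [ch a, ch b, ch c]"
    unfolding is_cycle_def using abc
    by (auto simp: walk_cons2 walk_single chV adjch chne)
  have girth: "graph_girth V E = 3"
  proof (rule antisym)
    show "graph_girth V E \<le> 3" unfolding graph_girth_def
      by (rule INF_lower2[of "[ch a, ch b, ch c]"]) (use cyc in \<open>auto simp: numeral_eq_enat\<close>)
    show "3 \<le> graph_girth V E" unfolding graph_girth_def
      by (rule INF_greatest) (simp add: is_cycle_def numeral_eq_enat)
  qed
  have upper: "graph_dist V E f g \<le> 3" if f: "f \<in> V" and g: "g \<in> V" for f g
  proof (cases "f = g")
    case True
    have "graph_dist V E f g \<le> enat (length [f] - 1)"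
      by (rule dist_le) (use f True in \<open>auto simp: walk_single\<close>)
    then show ?thesis by (rule order_trans) (simp add: numeral_eq_enat)
  next
    case False
    obtain p where p: "p \<in> topspace X" "f p = 0" using vanish_pt f unfolding V_def by blast
    obtain q where q: "q \<in> topspace X" "g q = 0" using vanish_pt g unfolding V_def by blast
    show ?thesis
    proof (cases "p = q")
      case True
      have "graph_dist V E f g \<le> enat (length [f, ch p, g] - 1)"
        using f g chV[OF p(1)] adjf(1)[of f p, OF p(2)] adjf(2)[of g p] q True by (intro dist_le) (simp_all add: walk_cons2 walk_single)
      then show ?thesis by (rule order_trans) (simp add: numeral_eq_enat)
    next
      case pq: False
      have "graph_dist V E f g \<le> enat (length [f, ch p, ch q, g] - 1)"
        using f g chV[OF p(1)] chV[OF q(1)] adjf(1)[of f p, OF p(2)] adjf(2)[of g q, OF q(2)] adjch[OF pq] by (intro dist_le) (simp_all add: walk_cons2 walk_single)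
      then show ?thesis by (rule order_trans) (simp add: numeral_eq_enat)
    qed
  qed
  define f where "f = ind (topspace X - {a})"
  define g where "g = ind (topspace X - {b})"
  have fC: "f \<in> CcF X" unfolding f_def by (rule ind_in_CcF[OF assms(1) abc(1)]) auto
  have gC: "g \<in> CcF X" unfolding g_def by (rule ind_in_CcF[OF assms(1) abc(2)]) auto
  have fV: "f \<in> V"
  proof -
    have "f c = 1" using abc unfolding f_def ind_def by simp
    hence "f \<noteq> (\<lambda>x. 0)" by (metis zero_neq_one)
    moreover have "(\<lambda>x. f x * ch a x) = (\<lambda>x. 0)" by (auto simp: fun_eq_iff f_def ch_def ind_def)
    ultimately show ?thesis using fC chC[OF abc(1)] chnz[of a] unfolding V_def zd_vertices_def by blast
  qed
  have gV: "g \<in> V"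
  proof -
    have "g c = 1" using abc unfolding g_def ind_def by simp
    hence "g \<noteq> (\<lambda>x. 0)" by (metis zero_neq_one)
    moreover have "(\<lambda>x. g x * ch b x) = (\<lambda>x. 0)" by (auto simp: fun_eq_iff g_def ch_def ind_def)
    ultimately show ?thesis using gC chC[OF abc(2)] chnz[of b] unfolding V_def zd_vertices_def by blast
  qed
  have fa: "f a = 0" "g a = 1" using abc by (auto simp: f_def g_def ind_def)
  have fg: "f \<noteq> g"
  proof
    assume "f = g" then have "f a = g a" by simp
    thus False using fa by simp
  qed
  have nadj: "\<not> E f g" unfolding E_def zd_adj_def
  proof
    assume "f \<noteq> g \<and> (\<lambda>x. f x * g x) = (\<lambda>x. 0)"
    hence "f c * g c = 0" by (simp add: fun_eq_iff)
    thus False using abc unfolding f_def g_def ind_def by auto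
  qed
  have nmid: False if "E f h" "E h g" "h \<in> V" for h
  proof -
    have h1: "(\<lambda>x. f x * h x) = (\<lambda>x. 0)" "(\<lambda>x. h x * g x) = (\<lambda>x. 0)"
      using that unfolding E_def zd_adj_def by auto
    have "h x = 0" for x
    proof (cases "x \<in> topspace X")
      case True
      show ?thesis
      proof (cases "x = a")
        case True
        hence "g x = 1" using abc \<open>x \<in> topspace X\<close> unfolding g_def ind_def by auto
        thus ?thesis using fun_cong[OF h1(2), of x] by simp
      next
        case False
        hence "f x = 1" using \<open>x \<in> topspace X\<close> unfolding f_def ind_def by auto
        thus ?thesis using fun_cong[OF h1(1), of x] by simp
      qed
    next
      case False
      have "h \<in> CcF X" using that(3) unfolding V_def zd_vertices_def by blast
      thus ?thesis using False unfolding CcF_def by blast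
    qed
    hence "h = (\<lambda>x. 0)" by (simp add: fun_eq_iff)
    thus False using that(3) unfolding V_def zd_vertices_def by blast
  qed
  have lower: "3 \<le> graph_dist V E f g" unfolding graph_dist_def
  proof (rule INF_greatest)
    fix xs assume xs: "xs \<in> {xs. is_walk V E xs \<and> hd xs = f \<and> last xs = g}"
    have "length xs \<ge> 4"
    proof (rule ccontr)
      assume "\<not> length xs \<ge> 4"
      moreover have "xs \<noteq> []" using xs unfolding is_walk_def by blast
      moreover have "length xs > 0" using \<open>xs \<noteq> []\<close> by simp
      ultimately have "length xs = 1 \<or> length xs = 2 \<or> length xs = 3" by linarith
      then show False
      proof (elim disjE)
        assume "length xs = 1" then obtain x where "xs = [x]" by (auto simp: length_Suc_conv)
        hence "hd xs = x" "last xs = x" by simp_all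
        moreover have "hd xs = f" "last xs = g" using xs by simp_all
        ultimately show False using fg by metis
      next
        assume "length xs = 2" then obtain x y where "xs = [x,y]"
          by (auto simp: numeral_2_eq_2 length_Suc_conv)
        hence w: "is_walk V E [f,g]" using xs by auto
        hence "E f g" by (simp only: walk_cons2)
        then show False using nadj by simp
      next
        assume "length xs = 3" then obtain x y z where "xs = [x,y,z]"
          by (auto simp: numeral_3_eq_3 length_Suc_conv)
        hence w: "is_walk V E [f,y,g]" using xs by auto
        hence "E f y" "E y g" "y \<in> V" by (simp_all only: walk_cons2 walk_single)
        then show False by (rule nmid)
      qed
    qed
    thus "3 \<le> enat (length xs - 1)" by (simp add: numeral_eq_enat)
  qed
  have diam: "graph_diam V E = 3"
  proof (rule antisym)
    show "graph_diam V E \<le> 3" unfolding graph_diam_def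
      by (intro SUP_least) (rule upper)
    show "3 \<le> graph_diam V E" unfolding graph_diam_def
      by (rule SUP_upper2[OF fV], rule SUP_upper2[OF gV], rule lower)
  qed
  show ?thesis using diam girth unfolding V_def E_def by (rule conjI)
qed

end
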